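(* Let $\rho=\sqrt2$ and $Z[\rho]=\{\pm z: z=\sum_{k=0}^n z_k\rho^k,\ n\ge0,\ z_k\in\{0,1\}\}$. Then $\mathbb{Z}$ is a proper subset of $Z[\rho]$. *)

theory Defs
  imports Complex_Main
begin

definition Zrho :: "real \<Rightarrow> real set" where
  "Zrho \<rho> = {s * (\<Sum>k\<le>n. z k * \<rho> ^ k) | s n z.
                 s \<in> {-1, 1} \<and> (\<forall>k\<le>n. z k \<in> {0, 1})}"

end

theory Submission
  imports Defs
begin

definition P :: "real \<Rightarrow> bool" where
  "P x \<longleftrightarrow> (\<exists>n z. (\<forall>k\<le>n. z k \<in> {0::real, 1}) \<and> x = (\<Sum>k\<le>n. z k * sqrt 2 ^ k))"

lemma P_zero: "P 0"
  unfolding P_def by (rule exI[of _ 0], rule exI[of _ "\<lambda>_. 0"]) simp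

lemma P_step:
  assumes "P x" and "b \<in> {0::real,1}"
  shows "P (2 * x + b)"
proof -
  obtain n z where z: "\<forall>k\<le>n. z k \<in> {0::real, 1}" and x: "x = (\<Sum>k\<le>n. z k * sqrt 2 ^ k)"
    using assms(1) unfolding P_def by blast
  define z' where "z' = (\<lambda>k. if k = 0 then b else if k = 1 then 0 else z (k - 2))"
  have "(\<Sum>k\<le>Suc (Suc n). z' k * sqrt 2 ^ k)
        = b + (\<Sum>k\<le>n. z k * sqrt 2 ^ Suc (Suc k))"
    by (simp add: sum.atMost_Suc_shift z'_def del: sum.atMost_Suc)
  also have "\<dots> = b + 2 * x"
    proof -
    have "\<And>k. z k * sqrt 2 ^ Suc (Suc k) = 2 * (z k * sqrt 2 ^ k)"
      by (simp add: power_Suc[symmetric] del: power_Suc) (simp add: power_add[symmetric] power_Suc2)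
    then show ?thesis unfolding x sum_distrib_left by (intro arg_cong[where f="\<lambda>t. b + t"] sum.cong) auto
  qed
  finally have "2 * x + b = (\<Sum>k\<le>Suc (Suc n). z' k * sqrt 2 ^ k)" by simp
  moreover have "\<forall>k\<le>Suc (Suc n). z' k \<in> {0, 1}"
    using z assms(2) by (auto simp: z'_def)
  ultimately show ?thesis unfolding P_def by blast
qed

lemma P_nat: "P (real m)"
proof (induction m rule: less_induct)
  case (less m)
  show ?case
  proof (cases "m = 0")
    case True then show ?thesis using P_zero by simp
  next
    case False
    have "P (real (m div 2))" using less False by simp
    moreover have "real (m mod 2) \<in> {0,1}"
      by (cases "even m") (auto simp: odd_iff_mod_2_eq_one even_iff_mod_2_eq_zero)
    ultimately have "P (2 * real (m div 2) + real (m mod 2))" by (rule P_step)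
    moreover have "2 * real (m div 2) + real (m mod 2) = real m"
      by (metis of_nat_add of_nat_mult of_nat_numeral div_mult_mod_eq mult.commute)
    ultimately show ?thesis by simp
  qed
qed

lemma P_Zrho: "P x \<Longrightarrow> s \<in> {-1,1} \<Longrightarrow> s * x \<in> Zrho (sqrt 2)"
  unfolding P_def Zrho_def by blast

theorem mainTheorem12:
  shows "(\<int> :: real set) \<subset> Zrho (sqrt 2)"
proof
  show "(\<int> :: real set) \<subseteq> Zrho (sqrt 2)"
  proof
    fix x :: real assume "x \<in> \<int>"
    then obtain i where i: "x = of_int i" by (auto elim: Ints_cases)
    show "x \<in> Zrho (sqrt 2)"
    proof (cases "i \<ge> 0")
      case True
      then have "x = 1 * real (nat i)" using i by simp
      then show ?thesis using P_Zrho[OF P_nat, of 1] by simp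
    next
      case False
      then have "x = -1 * real (nat (-i))" using i by simp
      then show ?thesis using P_Zrho[OF P_nat, of "-1"] by simp
    qed
  qed
  have "sqrt 2 \<in> Zrho (sqrt 2)"
  proof -
    have "P (sqrt 2)" unfolding P_def
      by (rule exI[of _ 1], rule exI[of _ "\<lambda>k. if k = 1 then 1 else 0"]) simp
    then show ?thesis using P_Zrho[of "sqrt 2" 1] by simp
  qed
  moreover have "sqrt 2 \<notin> (\<int> :: real set)"
  proof
    assume "sqrt 2 \<in> (\<int> :: real set)"
    then obtain i where i: "sqrt 2 = of_int i" by (auto elim: Ints_cases)
    have "1 < sqrt (2::real)" by simp
    moreover have "sqrt (2::real) < 2"
      using real_sqrt_less_iff[of 2 4] by (simp add: real_sqrt_four)
    ultimately have "1 < i" "i < 2" using i by linarith+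
    then show False by linarith
  qed
  ultimately show "(\<int> :: real set) \<noteq> Zrho (sqrt 2)" by blast
qed

end
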